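(* Let $T$ be a real with $0<T\le1$. For every $\alpha\in\mathbb{R}$, $\alpha$ is an r.e. $T$-convergent real if and only if there exists a $T$-convergent, computable, increasing sequence of reals which converges to $\alpha$.
   Context: A sequence $\{a_n\}$ is increasing if $a_{n+1}>a_n$ for all $n$. An increasing sequence $\{a_n\}$ of reals is $T$-convergent if $\sum_{n=0}^\infty(a_{n+1}-a_n)^T<\infty$. A real is r.e. if it is the limit of a computable increasing sequence of rationals; an r.e. real $\alpha$ is $T$-convergent if there is a $T$-convergent computable increasing sequence of rationals converging to $\alpha$. A sequence $\{a_n\}$ of reals is computable if there is a total recursive $f:\mathbb{N}\times\mathbb{N}\to\mathbb{Q}$ with $|a_n-f(n,m)|<2^{-m}$ for all $n,m$. *)

theory Defs
  imports Complex_Main "HOL-Library.Nat_Bijection"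
begin

datatype recf = Zer | Suc_f | Proj nat | Comp recf "recf list" | Prec recf recf | Mu recf

inductive evalr :: "recf \<Rightarrow> nat list \<Rightarrow> nat \<Rightarrow> bool" where
  zer: "evalr Zer xs 0"
| suc: "evalr Suc_f (x # xs) (Suc x)"
| proj: "i < length xs \<Longrightarrow> evalr (Proj i) xs (xs ! i)"
| comp: "length ys = length gs \<Longrightarrow> (\<forall>i<length gs. evalr (gs ! i) xs (ys ! i))
          \<Longrightarrow> evalr f ys z \<Longrightarrow> evalr (Comp f gs) xs z"
| prec0: "evalr f xs z \<Longrightarrow> evalr (Prec f g) (0 # xs) z"
| precS: "evalr (Prec f g) (n # xs) y \<Longrightarrow> evalr g (y # n # xs) z
          \<Longrightarrow> evalr (Prec f g) (Suc n # xs) z"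
| mu: "evalr f (n # xs) 0 \<Longrightarrow> (\<forall>m<n. \<exists>k. evalr f (m # xs) (Suc k))
          \<Longrightarrow> evalr (Mu f) xs n"

definition total_recursive :: "(nat \<Rightarrow> nat) \<Rightarrow> bool" where
  "total_recursive h \<longleftrightarrow> (\<exists>r. \<forall>n. evalr r [n] (h n))"

text \<open>Standard coding of rationals by naturals: k codes (a - b)/(c+1) where
k = <a,<b,c>> (Cantor pairing). Every rational has a code.\<close>
definition rat_decode :: "nat \<Rightarrow> rat" where
  "rat_decode k = (case prod_decode k of (a, r) \<Rightarrow>
     (case prod_decode r of (b, c) \<Rightarrow> (of_nat a - of_nat b) / of_nat (c + 1)))"

definition computable_rat_seq :: "(nat \<Rightarrow> rat) \<Rightarrow> bool" where
  "computable_rat_seq q \<longleftrightarrow> (\<exists>h. total_recursive h \<and> (\<forall>n. q n = rat_decode (h n)))"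

definition computable_rat_fun2 :: "(nat \<Rightarrow> nat \<Rightarrow> rat) \<Rightarrow> bool" where
  "computable_rat_fun2 f \<longleftrightarrow>
     (\<exists>h. total_recursive h \<and> (\<forall>n m. f n m = rat_decode (h (prod_encode (n, m)))))"

definition computable_real_seq :: "(nat \<Rightarrow> real) \<Rightarrow> bool" where
  "computable_real_seq a \<longleftrightarrow> (\<exists>f. computable_rat_fun2 f \<and>
     (\<forall>n m. \<bar>a n - real_of_rat (f n m)\<bar> < (1/2) ^ m))"

definition increasing_seq :: "(nat \<Rightarrow> real) \<Rightarrow> bool" where
  "increasing_seq a \<longleftrightarrow> (\<forall>n. a (Suc n) > a n)"

definition T_convergent :: "real \<Rightarrow> (nat \<Rightarrow> real) \<Rightarrow> bool" where
  "T_convergent T a \<longleftrightarrow> increasing_seq a \<and> summable (\<lambda>n. (a (Suc n) - a n) powr T)"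

definition re_real :: "real \<Rightarrow> bool" where
  "re_real \<alpha> \<longleftrightarrow> (\<exists>q. computable_rat_seq q \<and> increasing_seq (\<lambda>n. real_of_rat (q n))
                      \<and> (\<lambda>n. real_of_rat (q n)) \<longlonglongrightarrow> \<alpha>)"

definition re_T_convergent :: "real \<Rightarrow> real \<Rightarrow> bool" where
  "re_T_convergent T \<alpha> \<longleftrightarrow> re_real \<alpha> \<and>
     (\<exists>q. computable_rat_seq q \<and> T_convergent T (\<lambda>n. real_of_rat (q n))
          \<and> (\<lambda>n. real_of_rat (q n)) \<longlonglongrightarrow> \<alpha>)"

end

theory Submission
  imports Defs
begin


definition rfn :: "nat \<Rightarrow> (nat list \<Rightarrow> nat) \<Rightarrow> bool" where
  "rfn n g \<longleftrightarrow> (\<exists>r. \<forall>xs. length xs = n \<longrightarrow> evalr r xs (g xs))"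

lemma rfn_cong: assumes "rfn n g" "\<And>xs. length xs = n \<Longrightarrow> g xs = g' xs" shows "rfn n g'"
proof -
  obtain r where r: "\<forall>xs. length xs = n \<longrightarrow> evalr r xs (g xs)" using assms(1) rfn_def by auto
  have "\<forall>xs. length xs = n \<longrightarrow> evalr r xs (g' xs)" using r assms(2) by simp
  then show ?thesis unfolding rfn_def by blast
qed

lemma rfn_zero: "rfn n (\<lambda>xs. 0)"
  unfolding rfn_def by (auto intro: evalr.zer)

lemma rfn_proj: "i < n \<Longrightarrow> rfn n (\<lambda>xs. xs ! i)"
  unfolding rfn_def by (auto intro!: exI[of _ "Proj i"] evalr.proj)

lemma rfn_comp1: assumes "rfn 1 f" "rfn n g" shows "rfn n (\<lambda>xs. f [g xs])"
proof -
  obtain rf where rf: "\<forall>xs. length xs = 1 \<longrightarrow> evalr rf xs (f xs)" using assms(1) rfn_def by auto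
  obtain rg where rg: "\<forall>xs. length xs = n \<longrightarrow> evalr rg xs (g xs)" using assms(2) rfn_def by auto
  show ?thesis unfolding rfn_def
  proof (intro exI[of _ "Comp rf [rg]"] allI impI)
    fix xs :: "nat list" assume "length xs = n"
    then show "evalr (Comp rf [rg]) xs (f [g xs])"
      by (intro evalr.comp[of "[g xs]"]) (auto simp: rf rg)
  qed
qed

lemma rfn_comp2: assumes "rfn 2 f" "rfn n g1" "rfn n g2" shows "rfn n (\<lambda>xs. f [g1 xs, g2 xs])"
proof -
  obtain rf where rf: "\<forall>xs. length xs = 2 \<longrightarrow> evalr rf xs (f xs)" using assms(1) rfn_def by auto
  obtain r1 where r1: "\<forall>xs. length xs = n \<longrightarrow> evalr r1 xs (g1 xs)" using assms(2) rfn_def by auto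
  obtain r2 where r2: "\<forall>xs. length xs = n \<longrightarrow> evalr r2 xs (g2 xs)" using assms(3) rfn_def by auto
  show ?thesis unfolding rfn_def
  proof (intro exI[of _ "Comp rf [r1, r2]"] allI impI)
    fix xs :: "nat list" assume "length xs = n"
    then show "evalr (Comp rf [r1,r2]) xs (f [g1 xs, g2 xs])"
      by (intro evalr.comp[of "[g1 xs, g2 xs]"]) (auto simp: rf r1 r2 less_Suc_eq)
  qed
qed

lemma rfn_succ: assumes "rfn n g" shows "rfn n (\<lambda>xs. Suc (g xs))"
proof -
  have "rfn 1 (\<lambda>xs. Suc (hd xs))" unfolding rfn_def
    by (rule exI[of _ Suc_f]) (auto simp: length_Suc_conv intro: evalr.suc)
  from rfn_comp1[OF this assms] show ?thesis by simp
qed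

lemma rfn_const: "rfn n (\<lambda>xs. c)"
  by (induct c) (auto intro: rfn_zero rfn_succ)

lemma rfn_prec:
  assumes "rfn n f" "rfn m g" "m = Suc (Suc n)"
    and F0: "\<And>xs. F 0 xs = f xs" and FS: "\<And>k xs. F (Suc k) xs = g (F k xs # k # xs)"
  shows "rfn (Suc n) (\<lambda>xs. F (hd xs) (tl xs))"
proof -
  obtain rf where rf: "\<forall>xs. length xs = n \<longrightarrow> evalr rf xs (f xs)" using assms(1) rfn_def by auto
  obtain rg where rg: "\<forall>xs. length xs = Suc (Suc n) \<longrightarrow> evalr rg xs (g xs)" using assms(2,3) rfn_def by auto
  have *: "evalr (Prec rf rg) (k # xs) (F k xs)" if "length xs = n" for k xs
  proof (induct k)
    case 0 then show ?case using rf that by (simp add: F0 evalr.prec0)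
  next
    case (Suc k) then show ?case using rg that by (simp add: FS evalr.precS)
  qed
  show ?thesis unfolding rfn_def
    by (rule exI[of _ "Prec rf rg"]) (auto simp: length_Suc_conv intro: *)
qed

lemma rfn_mu:
  assumes "rfn m p" "m = Suc n" "\<And>xs. length xs = n \<Longrightarrow> \<exists>y. p (y # xs) = 0"
  shows "rfn n (\<lambda>xs. LEAST y. p (y # xs) = 0)"
proof -
  obtain r where r: "\<forall>xs. length xs = Suc n \<longrightarrow> evalr r xs (p xs)" using assms(1,2) rfn_def by auto
  show ?thesis unfolding rfn_def
  proof (intro exI[of _ "Mu r"] allI impI)
    fix xs :: "nat list" assume l: "length xs = n"
    let ?N = "LEAST y. p (y # xs) = 0"
    have r': "evalr r (y # xs) (p (y # xs))" for y using r l by simp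
    have "p (?N # xs) = 0" using assms(3)[OF l] by (rule LeastI_ex)
    then have a: "evalr r (?N # xs) 0" using r'[of ?N] by simp
    have b: "\<exists>k. evalr r (m # xs) (Suc k)" if "m < ?N" for m
    proof -
      have "p (m # xs) \<noteq> 0" using not_less_Least[OF that] .
      then obtain k where "p (m # xs) = Suc k" using not0_implies_Suc by blast
      then show ?thesis using r'[of m] by auto
    qed
    show "evalr (Mu r) xs ?N" using a b by (intro evalr.mu) auto
  qed
qed

lemma rfn_add: assumes "rfn n g1" "rfn n g2" shows "rfn n (\<lambda>xs. g1 xs + g2 xs)"
proof -
  have h: "rfn 1 (\<lambda>xs. hd xs)" by (rule rfn_cong[OF rfn_proj[of 0 1]]) (auto simp: length_Suc_conv)
  have s: "rfn 3 (\<lambda>ys. Suc (ys ! 0))" by (intro rfn_succ rfn_proj) simp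
  have "rfn 2 (\<lambda>xs. hd xs + hd (tl xs))"
    using rfn_prec[OF h s _, where F="\<lambda>k xs. k + hd xs"] by (simp add: numeral_2_eq_2)
  from rfn_comp2[OF this assms] show ?thesis by simp
qed

lemma rfn_mult: assumes "rfn n g1" "rfn n g2" shows "rfn n (\<lambda>xs. g1 xs * g2 xs)"
proof -
  have s: "rfn 3 (\<lambda>ys. ys ! 0 + ys ! 2)" by (intro rfn_add rfn_proj) simp_all
  have "rfn 2 (\<lambda>xs. hd xs * (tl xs ! 0))"
    using rfn_prec[OF rfn_zero s _, where F="\<lambda>k xs. k * (xs ! 0)"] by (simp add: add.commute numeral_2_eq_2 hd_conv_nth)
  from rfn_comp2[OF this assms] show ?thesis by simp
qed

lemma rfn_sub: assumes "rfn n g1" "rfn n g2" shows "rfn n (\<lambda>xs. g1 xs - g2 xs)"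
proof -
  have pr: "rfn 1 (\<lambda>xs. hd xs - 1)"
    using rfn_prec[OF rfn_zero[of 0] rfn_proj[of 1 2] _, where F="\<lambda>k xs. k - 1"] by simp
  have p: "rfn 3 (\<lambda>ys. ys ! 0 - 1)" using rfn_comp1[OF pr rfn_proj[of 0 3]] by simp
  have h: "rfn 1 (\<lambda>xs. hd xs)" by (rule rfn_cong[OF rfn_proj[of 0 1]]) (auto simp: length_Suc_conv)
  have "rfn 2 (\<lambda>xs. hd (tl xs) - hd xs)"
    using rfn_prec[OF h p _, where F="\<lambda>k xs. hd xs - k"] by (simp add: numeral_2_eq_2)
  from rfn_comp2[OF this assms(2,1)] show ?thesis by simp
qed

lemma rfn_pow2: assumes "rfn n g" shows "rfn n (\<lambda>xs. 2 ^ g xs)"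
proof -
  have s: "rfn 2 (\<lambda>ys. ys ! 0 + ys ! 0)" by (intro rfn_add rfn_proj) simp_all
  have "rfn 1 (\<lambda>xs. 2 ^ hd xs)"
    using rfn_prec[OF rfn_const[of 0 1] s _, where F="\<lambda>k xs. 2 ^ k"] by simp
  from rfn_comp1[OF this assms] show ?thesis by simp
qed

lemma rfn_tri: assumes "rfn n g" shows "rfn n (\<lambda>xs. triangle (g xs))"
proof -
  have s: "rfn 2 (\<lambda>ys. ys ! 0 + Suc (ys ! 1))" by (intro rfn_add rfn_succ rfn_proj) simp_all
  have "rfn 1 (\<lambda>xs. triangle (hd xs))"
    using rfn_prec[OF rfn_zero[of 0] s _, where F="\<lambda>k xs. triangle k"] by simp
  from rfn_comp1[OF this assms] show ?thesis by simp
qed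

lemma rfn_penc: assumes "rfn n g1" "rfn n g2" shows "rfn n (\<lambda>xs. prod_encode (g1 xs, g2 xs))"
  unfolding prod_encode_def using assms by (simp add: rfn_add rfn_tri)

lemma triangle_mono: "m \<le> n \<Longrightarrow> triangle m \<le> triangle n"
  by (induct n) (auto simp: le_Suc_eq)

definition dsum :: "nat \<Rightarrow> nat" where "dsum k = (LEAST s. Suc k - triangle (Suc s) = 0)"

lemma dsum_eq: "dsum k = fst (prod_decode k) + snd (prod_decode k)"
proof -
  obtain x y where p: "prod_decode k = (x, y)" by force
  have k: "k = triangle (x + y) + x" using prod_decode_inverse[of k] p by (simp add: prod_encode_def)
  have "dsum k = x + y" unfolding dsum_def
  proof (rule Least_equality)
    show "Suc k - triangle (Suc (x + y)) = 0" using k by simp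
  next
    fix s assume "Suc k - triangle (Suc s) = 0"
    then have "k < triangle (Suc s)" by simp
    show "x + y \<le> s"
    proof (rule ccontr)
      assume "\<not> x + y \<le> s"
      then have "triangle (Suc s) \<le> triangle (x + y)" by (intro triangle_mono) simp
      with \<open>k < triangle (Suc s)\<close> k show False by simp
    qed
  qed
  then show ?thesis using p by simp
qed

lemma pfst_eq: "fst (prod_decode k) = k - triangle (dsum k)"
proof -
  obtain x y where p: "prod_decode k = (x, y)" by force
  have k: "k = triangle (x + y) + x" using prod_decode_inverse[of k] p by (simp add: prod_encode_def)
  show ?thesis using dsum_eq[of k] p k by simp
qed

lemma psnd_eq: "snd (prod_decode k) = dsum k - fst (prod_decode k)"
  using dsum_eq[of k] by simp

lemma rfn_dsum: assumes "rfn n g" shows "rfn n (\<lambda>xs. dsum (g xs))"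
proof -
  have p: "rfn 2 (\<lambda>ys. Suc (ys ! 1) - triangle (Suc (ys ! 0)))"
    by (intro rfn_sub rfn_succ rfn_proj rfn_tri) simp_all
  have e: "\<exists>y. Suc (k) - triangle (Suc y) = 0" for k
    by (rule exI[of _ k]) simp
  have "rfn 1 (\<lambda>xs. LEAST y. Suc ((y # xs) ! 1) - triangle (Suc ((y # xs) ! 0)) = 0)"
    apply (rule rfn_mu[OF p], simp)
    subgoal for xs by (rule exI[of _ "xs ! 0"]) simp
    done
  then have "rfn 1 (\<lambda>xs. dsum (hd xs))"
    by (rule rfn_cong) (auto simp: dsum_def length_Suc_conv)
  from rfn_comp1[OF this assms] show ?thesis by simp
qed

lemma rfn_pfst: assumes "rfn n g" shows "rfn n (\<lambda>xs. fst (prod_decode (g xs)))"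
  unfolding pfst_eq using assms by (intro rfn_sub rfn_tri rfn_dsum)

lemma rfn_psnd: assumes "rfn n g" shows "rfn n (\<lambda>xs. snd (prod_decode (g xs)))"
  unfolding psnd_eq using assms by (intro rfn_sub rfn_dsum rfn_pfst)

lemma rfn_tr: assumes "total_recursive h" "rfn n g" shows "rfn n (\<lambda>xs. h (g xs))"
proof -
  obtain r where r: "\<forall>n. evalr r [n] (h n)" using assms(1) total_recursive_def by auto
  have "rfn 1 (\<lambda>xs. h (hd xs))" unfolding rfn_def
    by (rule exI[of _ r]) (auto simp: length_Suc_conv r)
  from rfn_comp1[OF this assms(2)] show ?thesis by simp
qed

lemma tr_rfn: assumes "rfn 1 (\<lambda>xs. h (hd xs))" shows "total_recursive h"
proof -
  obtain r where r: "\<forall>xs. length xs = 1 \<longrightarrow> evalr r xs (h (hd xs))" using assms rfn_def by auto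
  have "evalr r [n] (h n)" for n using r[rule_format, of "[n]"] by simp
  then show ?thesis unfolding total_recursive_def by blast
qed



lemma powr_subadd:
  fixes x y T :: real
  assumes "0 \<le> x" "0 \<le> y" "0 < T" "T \<le> 1"
  shows "(x + y) powr T \<le> x powr T + y powr T"
proof (cases "x + y = 0")
  case True then show ?thesis using assms by simp
next
  case False
  define s where "s = x + y"
  have s: "s > 0" using False assms s_def by simp
  have x1: "x / s \<le> (x / s) powr T"
    using powr_mono'[of T 1 "x/s"] assms s s_def by (simp add: divide_le_eq_1)
  have y1: "y / s \<le> (y / s) powr T"
    using powr_mono'[of T 1 "y/s"] assms s s_def by (simp add: divide_le_eq_1)
  have xe: "x powr T = s powr T * (x / s) powr T"
    using s assms by (simp add: powr_divide)
  have ye: "y powr T = s powr T * (y / s) powr T"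
    using s assms by (simp add: powr_divide)
  have "s powr T = s powr T * (x / s + y / s)" using s s_def by (simp add: add_divide_distrib[symmetric])
  also have "\<dots> \<le> s powr T * ((x / s) powr T + (y / s) powr T)"
    using x1 y1 by (intro mult_left_mono) auto
  finally show ?thesis using xe ye s_def by (simp add: distrib_left)
qed

definition Ad :: "nat \<Rightarrow> nat" where "Ad k = fst (prod_decode k)"
definition Bd :: "nat \<Rightarrow> nat" where "Bd k = fst (prod_decode (snd (prod_decode k)))"
definition Cd :: "nat \<Rightarrow> nat" where "Cd k = snd (prod_decode (snd (prod_decode k)))"

lemma rat_decode_eq: "real_of_rat (rat_decode k) = (real (Ad k) - real (Bd k)) / real (Cd k + 1)"
  unfolding rat_decode_def Ad_def Bd_def Cd_def
  by (simp add: case_prod_beta of_rat_divide of_rat_diff of_rat_add)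

lemma code_eq:
  "real_of_rat (rat_decode (prod_encode (A * 2 ^ m + (C + 1), prod_encode (B * 2 ^ m, (C + 1) * 2 ^ m - 1))))
   = (real A - real B) / real (C + 1) + (1/2) ^ m"
proof -
  have e: "(C + 1) * 2 ^ m - 1 + 1 = (C + 1) * (2::nat) ^ m" by simp
  show ?thesis unfolding rat_decode_eq Ad_def Bd_def Cd_def
    by (simp only: prod_encode_inverse fst_conv snd_conv e) (simp add: field_simps)
qed

lemma cmp_lemma:
  fixes A B C A' B' C' m :: nat
  shows "(A * (C' + 1) * 2 ^ m + 2 * (C + 1) * (C' + 1) + B' * (C + 1) * 2 ^ m
          < A' * (C + 1) * 2 ^ m + B * (C' + 1) * 2 ^ m) \<longleftrightarrow>
    (real A - real B) / real (C + 1) + 2 * (1/2) ^ m < (real A' - real B') / real (C' + 1)"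
proof -
  define c where "c = real (C + 1)"
  define c' where "c' = real (C' + 1)"
  define p where "p = (2::real) ^ m"
  have pos: "c > 0" "c' > 0" "p > 0" unfolding c_def c'_def p_def by auto
  have "(real A - real B) / real (C + 1) + 2 * (1/2) ^ m < (real A' - real B') / real (C' + 1)
     \<longleftrightarrow> (real A - real B) / c + 2 / p < (real A' - real B') / c'"
    unfolding c_def c'_def p_def by (simp add: power_one_over)
  also have "\<dots> \<longleftrightarrow> ((real A - real B) / c + 2 / p) * (c * c' * p) < ((real A' - real B') / c') * (c * c' * p)"
    using pos by (intro mult_less_cancel_right_pos[symmetric]) simp
  also have "\<dots> \<longleftrightarrow> (real A - real B) * c' * p + 2 * c * c' < (real A' - real B') * c * p"
  proof -
    have "((real A - real B) / c + 2 / p) * (c * c' * p) = (real A - real B) * c' * p + 2 * c * c'"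
      using pos by (simp add: field_simps)
    moreover have "((real A' - real B') / c') * (c * c' * p) = (real A' - real B') * c * p"
      using pos by (simp add: field_simps)
    ultimately show ?thesis by simp
  qed
  also have "\<dots> \<longleftrightarrow> real A * c' * p + 2 * c * c' + real B' * c * p < real A' * c * p + real B * c' * p"
    by (simp add: algebra_simps)
  also have "\<dots> \<longleftrightarrow> real (A * (C' + 1) * 2 ^ m + 2 * (C + 1) * (C' + 1) + B' * (C + 1) * 2 ^ m)
          < real (A' * (C + 1) * 2 ^ m + B * (C' + 1) * 2 ^ m)"
    unfolding c_def c'_def p_def by (simp add: algebra_simps)
  finally show ?thesis by (simp only: of_nat_less_iff)
qed

lemma backward:
  assumes T: "0 < T" "T \<le> 1" and tc: "T_convergent T a" and cr: "computable_real_seq a"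
    and lim: "a \<longlonglongrightarrow> \<alpha>"
  shows "re_T_convergent T \<alpha>"
proof -
  obtain f where f: "computable_rat_fun2 f" and ap: "\<forall>n m. \<bar>a n - real_of_rat (f n m)\<bar> < (1/2)^m"
    using cr computable_real_seq_def by auto
  obtain H where H: "total_recursive H" and fH: "\<forall>n m. f n m = rat_decode (H (prod_encode (n, m)))"
    using f computable_rat_fun2_def by auto
  have inc: "a n < a (Suc n)" for n using tc by (simp add: T_convergent_def increasing_seq_def)
  define u where "u n m = H (prod_encode (n, m))" for n m
  define rr where "rr k = real_of_rat (rat_decode k)" for k
  have ap': "\<bar>a n - rr (u n m)\<bar> < (1/2)^m" for n m using ap fH unfolding rr_def u_def by simp
  define Lf where "Lf n m = Ad (u n m) * (Cd (u (Suc n) m) + 1) * 2 ^ m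
     + 2 * (Cd (u n m) + 1) * (Cd (u (Suc n) m) + 1) + Bd (u (Suc n) m) * (Cd (u n m) + 1) * 2 ^ m" for n m
  define Rf where "Rf n m = Ad (u (Suc n) m) * (Cd (u n m) + 1) * 2 ^ m
     + Bd (u n m) * (Cd (u (Suc n) m) + 1) * 2 ^ m" for n m
  have cmp: "Lf n m < Rf n m \<longleftrightarrow> rr (u n m) + 2 * (1/2)^m < rr (u (Suc n) m)" for n m
    unfolding Lf_def Rf_def rr_def rat_decode_eq by (rule cmp_lemma)
  have ex: "\<exists>m. Lf n m < Rf n m" for n
  proof -
    have d: "(a (Suc n) - a n) / 4 > 0" using inc[of n] by simp
    obtain m where m: "(1/2::real)^m < (a (Suc n) - a n) / 4"
      using real_arch_pow_inv[OF d, of "1/2"] by auto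
    define h where "h = (1/2::real)^m"
    have "rr (u n m) + 2 * h < rr (u (Suc n) m)"
      using ap'[of n m, folded h_def] ap'[of "Suc n" m, folded h_def] m[folded h_def]
      unfolding abs_less_iff by (elim conjE) argo
    then have "rr (u n m) + 2 * (1/2)^m < rr (u (Suc n) m)" unfolding h_def .
    then show ?thesis using cmp by blast
  qed
  define mn where "mn n = (LEAST m. Suc (Lf n m) - Rf n m = 0)" for n
  have mnp: "Lf n (mn n) < Rf n (mn n)" for n
  proof -
    have "\<exists>m. Suc (Lf n m) - Rf n m = 0" using ex[of n] by (auto simp: Suc_le_eq)
    from LeastI_ex[OF this] show ?thesis unfolding mn_def by simp
  qed
  define code where "code n = prod_encode (Ad (u n (mn n)) * 2 ^ mn n + (Cd (u n (mn n)) + 1),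
     prod_encode (Bd (u n (mn n)) * 2 ^ mn n, (Cd (u n (mn n)) + 1) * 2 ^ mn n - 1))" for n
  define qv where "qv n = rr (code n)" for n
  have qv_eq: "qv n = rr (u n (mn n)) + (1/2)^(mn n)" for n
    unfolding qv_def code_def rr_def by (subst code_eq) (simp only: rat_decode_eq)
  have lo: "a n < qv n" for n using ap'[of n "mn n"] qv_eq[of n] unfolding abs_less_iff by (elim conjE) linarith
  have hi: "qv n < a (Suc n)" for n
    using ap'[of "Suc n" "mn n"] qv_eq[of n] mnp[of n] cmp[of n "mn n"] unfolding abs_less_iff by (elim conjE) linarith
  have M: "rfn 1 (\<lambda>xs. mn (hd xs))"
  proof -
    have p: "rfn 2 (\<lambda>ys. Suc (Lf (ys!1) (ys!0)) - Rf (ys!1) (ys!0))"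
      unfolding Lf_def Rf_def Ad_def Bd_def Cd_def u_def
      by (intro rfn_sub rfn_add rfn_mult rfn_succ rfn_pow2 rfn_pfst rfn_psnd rfn_penc rfn_tr[OF H]
          rfn_proj rfn_const) simp_all
    have "rfn 1 (\<lambda>xs. LEAST y. Suc (Lf ((y#xs)!1) ((y#xs)!0)) - Rf ((y#xs)!1) ((y#xs)!0) = 0)"
      apply (rule rfn_mu[OF p], simp)
      subgoal for xs using ex[of "xs!0"] by (auto simp: Suc_le_eq)
      done
    then show ?thesis by (rule rfn_cong) (auto simp: mn_def length_Suc_conv)
  qed
  have hd1: "rfn 1 (\<lambda>xs. hd xs)" by (rule rfn_cong[OF rfn_proj[of 0 1]]) (auto simp: length_Suc_conv)
  have "rfn 1 (\<lambda>xs. code (hd xs))"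
    unfolding code_def Ad_def Bd_def Cd_def u_def
    by (intro rfn_sub rfn_add rfn_mult rfn_pow2 rfn_pfst rfn_psnd rfn_penc rfn_tr[OF H] M hd1 rfn_const)
  then have trc: "total_recursive code" by (rule tr_rfn)
  define q where "q n = rat_decode (code n)" for n
  have cq: "computable_rat_seq q" unfolding computable_rat_seq_def q_def using trc by blast
  have qq: "(\<lambda>n. real_of_rat (q n)) = qv" unfolding q_def qv_def rr_def by simp
  have incq: "increasing_seq qv" unfolding increasing_seq_def using lo hi by (meson less_trans)
  have limq: "qv \<longlonglongrightarrow> \<alpha>"
  proof (rule tendsto_sandwich[OF _ _ lim])
    show "\<forall>\<^sub>F n in sequentially. a n \<le> qv n" using lo by (simp add: less_imp_le)
    show "\<forall>\<^sub>F n in sequentially. qv n \<le> a (Suc n)" using hi by (simp add: less_imp_le)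
    show "(\<lambda>n. a (Suc n)) \<longlonglongrightarrow> \<alpha>" using lim by (rule LIMSEQ_Suc)
  qed
  have sumq: "summable (\<lambda>n. (qv (Suc n) - qv n) powr T)"
  proof -
    define d where "d n = a (Suc n) - a n" for n
    have sd: "summable (\<lambda>n. d n powr T)" using tc unfolding T_convergent_def d_def by simp
    have sd2: "summable (\<lambda>n. d (Suc n) powr T + d n powr T)"
      using sd summable_Suc_iff[of "\<lambda>n. d n powr T"] by (intro summable_add) auto
    show ?thesis
    proof (rule summable_comparison_test'[OF sd2])
      fix n :: nat
      have dpos: "d n \<ge> 0" "d (Suc n) \<ge> 0" using inc unfolding d_def by (auto simp: less_imp_le)
      have pos: "qv (Suc n) - qv n \<ge> 0" using incq unfolding increasing_seq_def by (simp add: less_imp_le)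
      have le: "qv (Suc n) - qv n \<le> d (Suc n) + d n" using lo[of n] hi[of "Suc n"] unfolding d_def by simp
      have "norm ((qv (Suc n) - qv n) powr T) = (qv (Suc n) - qv n) powr T" by simp
      also have "\<dots> \<le> (d (Suc n) + d n) powr T" using powr_mono2[OF _ pos le] T by simp
      also have "\<dots> \<le> d (Suc n) powr T + d n powr T" using powr_subadd[OF dpos(2) dpos(1) T] .
      finally show "norm ((qv (Suc n) - qv n) powr T) \<le> d (Suc n) powr T + d n powr T" .
    qed
  qed
  have tcq: "T_convergent T qv" using incq sumq unfolding T_convergent_def by simp
  have "computable_rat_seq q \<and> increasing_seq (\<lambda>n. real_of_rat (q n)) \<and> (\<lambda>n. real_of_rat (q n)) \<longlonglongrightarrow> \<alpha>"
    using cq incq limq qq by simp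
  moreover have "computable_rat_seq q \<and> T_convergent T (\<lambda>n. real_of_rat (q n)) \<and> (\<lambda>n. real_of_rat (q n)) \<longlonglongrightarrow> \<alpha>"
    using cq tcq limq qq by simp
  ultimately show ?thesis unfolding re_T_convergent_def re_real_def by blast
qed

lemma forward:
  assumes "re_T_convergent T \<alpha>"
  shows "\<exists>a. T_convergent T a \<and> computable_real_seq a \<and> increasing_seq a \<and> a \<longlonglongrightarrow> \<alpha>"
proof -
  obtain q where cq: "computable_rat_seq q" and tc: "T_convergent T (\<lambda>n. real_of_rat (q n))"
    and lim: "(\<lambda>n. real_of_rat (q n)) \<longlonglongrightarrow> \<alpha>"
    using assms re_T_convergent_def by auto
  obtain hq where hq: "total_recursive hq" "\<forall>n. q n = rat_decode (hq n)"
    using cq computable_rat_seq_def by auto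
  have hd1: "rfn 1 (\<lambda>xs. hd xs)" by (rule rfn_cong[OF rfn_proj[of 0 1]]) (auto simp: length_Suc_conv)
  have "rfn 1 (\<lambda>xs. hq (fst (prod_decode (hd xs))))" by (intro rfn_tr[OF hq(1)] rfn_pfst hd1)
  then have tr: "total_recursive (\<lambda>k. hq (fst (prod_decode k)))" by (rule tr_rfn)
  have "computable_rat_fun2 (\<lambda>n m. q n)" unfolding computable_rat_fun2_def
    using tr hq(2) by (intro exI[of _ "\<lambda>k. hq (fst (prod_decode k))"]) simp
  then have "computable_real_seq (\<lambda>n. real_of_rat (q n))" unfolding computable_real_seq_def
    by (intro exI[of _ "\<lambda>n m. q n"]) simp
  then show ?thesis using tc lim unfolding T_convergent_def by blast
qed

theorem mainTheorem2:
  fixes T \<alpha> :: real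
  assumes "0 < T" and "T \<le> 1"
  shows "re_T_convergent T \<alpha> \<longleftrightarrow>
    (\<exists>a. T_convergent T a \<and> computable_real_seq a \<and> increasing_seq a \<and> a \<longlonglongrightarrow> \<alpha>)"
  using forward backward assms by blast

end
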